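(* Assume the setting below and define $$\alpha_{ST}(t)=\max_{0\le i\le N-1}\ \sum_{j=i}^{i+N-1}L_j\,C\left\lceil\frac{t-o_{j,i}}{p}\right\rceil,\qquad t\ge 0.$$ Then for all $s\in\mathbb R$ and $t\ge0$, $C\cdot\Delta t_{ST}(s,s+t)\le\alpha_{ST}(t)$; i.e. $\alpha_{ST}$ is an arrival curve of the credit-frozen part due to ST traffic.
   Context: Fix an output port with physical link rate $C>0$. Its gate control list (GCL) is periodic with period $p>0$ and contains $N\ge 1$ scheduled-traffic (ST) windows per period. Window $k\in\{0,\dots,N-1\}$ is the interval $[o_k,o_k+L_k)$, where $0\le o_0<o_1<\dots<o_{N-1}<p$, $L_k\ge 0$, $o_k+L_k\le o_{k+1}$ for $k<N-1$ and $o_{N-1}+L_{N-1}\le o_0+p$. Indices are extended to all integers periodically: $o_{k+N}=o_k+p$, $L_{k+N}=L_k$. Relative offsets are $o_{j,i}=o_j-o_i$. Let $S=\bigcup_{k\in\mathbb Z}[o_k,o_k+L_k)$ and for $s\le t$ let $\Delta t_{ST}(s,t)$ be the Lebesgue measure of $S\cap[s,t]$. *)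

theory Defs
  imports "HOL-Analysis.Analysis"
begin

text \<open>GCL windows given by offsets off k and lengths L k for k < N,
  extended periodically to all integer indices.\<close>

definition off_ext :: "(nat \<Rightarrow> real) \<Rightarrow> nat \<Rightarrow> real \<Rightarrow> int \<Rightarrow> real" where
  "off_ext off N p k = off (nat (k mod int N)) + p * of_int (k div int N)"

definition len_ext :: "(nat \<Rightarrow> real) \<Rightarrow> nat \<Rightarrow> int \<Rightarrow> real" where
  "len_ext L N k = L (nat (k mod int N))"

definition ST_set :: "(nat \<Rightarrow> real) \<Rightarrow> (nat \<Rightarrow> real) \<Rightarrow> nat \<Rightarrow> real \<Rightarrow> real set" where
  "ST_set off L N p = (\<Union>k::int. {off_ext off N p k ..< off_ext off N p k + len_ext L N k})"

definition delta_ST :: "(nat \<Rightarrow> real) \<Rightarrow> (nat \<Rightarrow> real) \<Rightarrow> nat \<Rightarrow> real \<Rightarrow> real \<Rightarrow> real \<Rightarrow> real" where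
  "delta_ST off L N p s t = measure lebesgue (ST_set off L N p \<inter> {s..t})"

definition alpha_ST :: "real \<Rightarrow> (nat \<Rightarrow> real) \<Rightarrow> (nat \<Rightarrow> real) \<Rightarrow> nat \<Rightarrow> real \<Rightarrow> real \<Rightarrow> real" where
  "alpha_ST C off L N p t =
     Max ((\<lambda>i::int. \<Sum>j\<in>{i..i + int N - 1}.
              len_ext L N j * C *
              of_int \<lceil>(t - (off_ext off N p j - off_ext off N p i)) / p\<rceil>) ` {0..<int N})"

end

theory Submission imports Defs begin

locale gcl =
  fixes p :: real and N :: nat and off L :: "nat \<Rightarrow> real"
  assumes p: "p > 0" and N: "N \<ge> 1"
    and inc: "\<And>k. Suc k < N \<Longrightarrow> off k < off (Suc k)"
    and Lnn: "\<And>k. k < N \<Longrightarrow> L k \<ge> 0"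
    and gap: "\<And>k. Suc k < N \<Longrightarrow> off k + L k \<le> off (Suc k)"
    and wrap: "off (N - 1) + L (N - 1) \<le> off 0 + p"
    and wraps: "off (N - 1) < off 0 + p"
begin

abbreviation "ox \<equiv> off_ext off N p"
abbreviation "lx \<equiv> len_ext L N"

lemma ll_nn: "lx k \<ge> 0"
proof -
  have "k mod int N < int N" "0 \<le> k mod int N" using N by simp_all
  then have "nat (k mod int N) < N" by (simp add: nat_less_iff)
  then show ?thesis unfolding len_ext_def using Lnn by blast
qed

lemma ll_shift: "lx (k + m * int N) = lx k"
  unfolding len_ext_def by simp

lemma oo_shift: "ox (k + m * int N) = ox k + of_int m * p"
  unfolding off_ext_def using N by (simp add: algebra_simps)

lemma oo_base: "0 \<le> k \<Longrightarrow> k < int N \<Longrightarrow> ox k = off (nat k)"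
  unfolding off_ext_def by simp

lemma ll_base: "0 \<le> k \<Longrightarrow> k < int N \<Longrightarrow> lx k = L (nat k)"
  unfolding len_ext_def by simp

lemma step_base: assumes "0 \<le> k" "k < int N" shows "ox k + lx k \<le> ox (k+1)"
proof (cases "k + 1 < int N")
  case True
  then show ?thesis using gap[of "nat k"] assms oo_base[of k] oo_base[of "k+1"]
    unfolding len_ext_def by (simp add: nat_add_distrib)
next
  case False
  then have k: "k = int N - 1" using assms by simp
  have "ox (k+1) = ox (0 + 1 * int N)" using k by simp
  also have "\<dots> = off 0 + p" using oo_shift[of 0 1] oo_base[of 0] N by simp
  moreover have "ox k = off (N - 1)" "lx k = L (N - 1)"
    using oo_base[of k] ll_base[of k] assms k by (simp_all add: nat_diff_distrib)
  ultimately show ?thesis using wrap by simp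
qed

lemma step: "ox k + lx k \<le> ox (k+1)"
proof -
  define r where "r = k mod int N"
  define q where "q = k div int N"
  have k: "k = r + q * int N" unfolding r_def q_def by simp
  have r: "0 \<le> r" "r < int N" unfolding r_def using N by auto
  have "ox k + lx k = ox r + lx r + of_int q * p" using k oo_shift[of r q] ll_shift[of r q] by simp
  also have "\<dots> \<le> ox (r+1) + of_int q * p" using step_base[OF r] by simp
  also have "\<dots> = ox (k+1)" using k oo_shift[of "r+1" q] by (simp add: algebra_simps)
  finally show ?thesis .
qed

lemma mono_gap: "k < m \<Longrightarrow> ox k + lx k \<le> ox m"
proof (induction m rule: int_gr_induct)
  case base then show ?case using step by simp
next
  case (step m) then show ?case using gcl.step[OF gcl_axioms, of m] ll_nn[of m] by linarith
qed

lemma mono: "k \<le> m \<Longrightarrow> ox k \<le> ox m"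
  using mono_gap[of k m] ll_nn[of k] by (cases "k = m") auto


lemma sstep_base: assumes "0 \<le> k" "k < int N" shows "ox k < ox (k+1)"
proof (cases "k + 1 < int N")
  case True
  then show ?thesis using inc[of "nat k"] assms oo_base[of k] oo_base[of "k+1"]
    by (simp add: nat_add_distrib)
next
  case False
  then have k: "k = int N - 1" using assms by simp
  have "ox (k+1) = ox (0 + 1 * int N)" using k by simp
  also have "\<dots> = off 0 + p" using oo_shift[of 0 1] oo_base[of 0] N by simp
  finally show ?thesis using wraps k oo_base[of k] assms by (simp add: nat_diff_distrib)
qed

lemma sstep: "ox k < ox (k+1)"
proof -
  define r where "r = k mod int N"
  define q where "q = k div int N"
  have k: "k = r + q * int N" unfolding r_def q_def by simp
  have r: "0 \<le> r" "r < int N" unfolding r_def using N by auto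
  have "ox k = ox r + of_int q * p" using k oo_shift[of r q] by simp
  also have "\<dots> < ox (r+1) + of_int q * p" using sstep_base[OF r] by simp
  also have "\<dots> = ox (k+1)" using k oo_shift[of "r+1" q] by (simp add: algebra_simps)
  finally show ?thesis .
qed

lemma smono: "k < m \<Longrightarrow> ox k < ox m"
proof (induction m rule: int_gr_induct)
  case base then show ?case using sstep by simp
next
  case (step m) then show ?case using gcl.sstep[OF gcl_axioms, of m] by linarith
qed

abbreviation "SS \<equiv> ST_set off L N p"

lemma SS_def': "SS = (\<Union>k. {ox k..<ox k + lx k})"
  unfolding ST_set_def by simp

lemma SS_sets: "SS \<in> sets lebesgue"
  unfolding SS_def' by (intro sets.countable_UN') auto

lemma SS_fm: "SS \<inter> {a..b} \<in> lmeasurable"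
  by (rule fmeasurableI2[of "{a..b}"]) (auto intro: SS_sets)

lemma mem_SS: "x \<in> SS \<Longrightarrow> \<exists>k. ox k \<le> x \<and> x < ox k + lx k"
  unfolding SS_def' by auto

lemma win_SS: "{ox k..<ox k + lx k} \<subseteq> SS"
  unfolding SS_def' by auto

lemma Ico_lm: "{a..<b::real} \<in> lmeasurable"
  by (rule fmeasurableI2[of "{a..b}"]) auto

lemma bound_at:
  assumes t: "t \<ge> 0"
  shows "measure lebesgue (SS \<inter> {ox i..ox i + t})
     \<le> (\<Sum>j\<in>{i..i + int N - 1}. lx j * of_int \<lceil>(t - (ox j - ox i)) / p\<rceil>)"
proof -
  define m where "m = nat \<lceil>t / p\<rceil>"
  have mp: "of_int (int m) * p \<ge> t"
  proof -
    have "t / p \<le> of_int \<lceil>t / p\<rceil>" by (rule le_of_int_ceiling)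
    also have "\<dots> = of_int (int m)"
    proof -
      have "0 \<le> t / p" using t p by simp
      then have "0 \<le> \<lceil>t / p\<rceil>" by simp
      then show ?thesis unfolding m_def by simp
    qed
    finally show ?thesis using p by (simp add: divide_le_eq)
  qed
  define K where "K = {k. i \<le> k \<and> k < i + int m * int N \<and> ox k < ox i + t}"
  have finK: "finite K" unfolding K_def
    by (rule finite_subset[of _ "{i..<i + int m * int N}"]) auto
  have sub: "SS \<inter> {ox i..ox i + t} \<subseteq> (\<Union>k\<in>K. {ox k..<ox k + lx k}) \<union> {ox i + t}"
  proof
    fix x assume x: "x \<in> SS \<inter> {ox i..ox i + t}"
    then obtain k where k: "ox k \<le> x" "x < ox k + lx k" using mem_SS by blast
    show "x \<in> (\<Union>k\<in>K. {ox k..<ox k + lx k}) \<union> {ox i + t}"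
    proof (cases "ox k < ox i + t")
      case False then show ?thesis using x k by auto
    next
      case True
      have ki: "i \<le> k"
      proof (rule ccontr)
        assume "\<not> i \<le> k"
        then have "ox k + lx k \<le> ox i" using mono_gap by simp
        then show False using x k by auto
      qed
      have "k < i + int m * int N"
      proof (rule ccontr)
        assume "\<not> k < i + int m * int N"
        then have "ox (i + int m * int N) \<le> ox k" using mono by simp
        then show False using oo_shift[of i "int m"] mp True by simp
      qed
      then have "k \<in> K" unfolding K_def using ki True by simp
      then show ?thesis using k by auto
    qed
  qed
  have "measure lebesgue (SS \<inter> {ox i..ox i + t})
     \<le> measure lebesgue ((\<Union>k\<in>K. {ox k..<ox k + lx k}) \<union> {ox i + t})"
  proof (rule measure_mono_fmeasurable[OF sub])
    show "SS \<inter> {ox i..ox i + t} \<in> sets lebesgue" using SS_fm by blast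
    have "(\<Union>k\<in>K. {ox k..<ox k + lx k}) \<in> lmeasurable"
      by (rule fmeasurable.finite_UN) (auto simp: finK Ico_lm)
    moreover have "{ox i + t} \<in> lmeasurable" using lmeasurable_cbox[of "ox i + t" "ox i + t"] by simp
    ultimately show "(\<Union>k\<in>K. {ox k..<ox k + lx k}) \<union> {ox i + t} \<in> lmeasurable"
      by (rule fmeasurable.Un)
  qed
  also have "\<dots> \<le> measure lebesgue (\<Union>k\<in>K. {ox k..<ox k + lx k}) + measure lebesgue {ox i + t}"
    by (rule measure_Un_le) (auto intro!: sets.finite_UN finK)
  also have "\<dots> \<le> (\<Sum>k\<in>K. measure lebesgue {ox k..<ox k + lx k})"
    by (simp, rule measure_UNION_le) (auto simp: finK)
  also have "\<dots> = (\<Sum>k\<in>K. lx k)"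
    using ll_nn by (intro sum.cong) auto
  finally have A: "measure lebesgue (SS \<inter> {ox i..ox i + t}) \<le> (\<Sum>k\<in>K. lx k)" .
  define J where "J = {i..i + int N - 1}"
  define c where "c j = \<lceil>(t - (ox j - ox i)) / p\<rceil>" for j
  define Sg where "Sg = Sigma J (\<lambda>j. {0..<c j})"
  define f where "f = (\<lambda>(j::int, n::int). j + n * int N)"
  have finJ: "finite J" unfolding J_def by simp
  have finSg: "finite Sg" unfolding Sg_def using finJ by auto
  have c_nn: "c j \<ge> 0" if "j \<in> J" for j
  proof -
    have "ox j < ox (i + 1 * int N)" using that unfolding J_def by (intro smono) auto
    then have "ox j - ox i < p" using oo_shift[of i 1] by simp
    then have "(t - (ox j - ox i)) / p > -1" using p t by (simp add: field_simps)
    then show ?thesis unfolding c_def by (simp add: ceiling_less_iff)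
  qed
  have KS: "K \<subseteq> f ` Sg"
  proof
    fix k assume k: "k \<in> K"
    define j where "j = i + (k - i) mod int N"
    define n where "n = (k - i) div int N"
    have kjn: "k = j + n * int N" unfolding j_def n_def by simp
    have jJ: "j \<in> J" unfolding J_def j_def using N by auto
    have n0: "n \<ge> 0" unfolding n_def using k N unfolding K_def by (simp add: pos_imp_zdiv_nonneg_iff)
    have "ox k = ox j + of_int n * p" using kjn oo_shift by simp
    then have "of_int n * p < t - (ox j - ox i)" using k unfolding K_def by simp
    then have "of_int n < (t - (ox j - ox i)) / p" using p by (simp add: field_simps)
    then have "n < c j" unfolding c_def by (simp add: less_ceiling_iff)
    then have "(j, n) \<in> Sg" unfolding Sg_def using jJ n0 by simp
    then show "k \<in> f ` Sg" using kjn unfolding f_def by force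
  qed
  have "(\<Sum>k\<in>K. lx k) \<le> (\<Sum>k\<in>f ` Sg. lx k)"
    by (rule sum_mono2) (use finSg KS ll_nn in auto)
  also have "\<dots> \<le> (\<Sum>x\<in>Sg. (lx \<circ> f) x)"
    by (rule sum_image_le) (use finSg ll_nn in auto)
  also have "\<dots> = (\<Sum>j\<in>J. \<Sum>n\<in>{0..<c j}. lx (j + n * int N))"
    unfolding Sg_def f_def by (subst sum.Sigma) (auto simp: finJ split_def intro!: sum.cong)
  also have "\<dots> = (\<Sum>j\<in>J. lx j * of_int (c j))"
  proof (rule sum.cong)
    fix j assume "j \<in> J"
    then show "(\<Sum>n\<in>{0..<c j}. lx (j + n * int N)) = lx j * of_int (c j)"
      using c_nn[of j] by (simp add: ll_shift)
  qed simp
  finally show ?thesis using A unfolding J_def c_def by simp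
qed

lemma shift_in:
  assumes t: "t \<ge> 0" and s: "ox i \<le> s" "s < ox i + lx i"
  shows "measure lebesgue (SS \<inter> {s..s+t}) \<le> measure lebesgue (SS \<inter> {ox i..ox i + t})"
proof (cases "s \<le> ox i + t")
  case True
  define a where "a = ox i"
  have W: "{a..<s} \<subseteq> SS" using win_SS[of i] s unfolding a_def by auto
  have "measure lebesgue (SS \<inter> {s..s+t}) \<le> measure lebesgue ((SS \<inter> {s..a+t}) \<union> {a+t..s+t})"
    by (rule measure_mono_fmeasurable) (auto intro!: fmeasurable.Un SS_fm SS_sets)
  also have "\<dots> \<le> measure lebesgue (SS \<inter> {s..a+t}) + measure lebesgue {a+t..s+t}"
    by (rule measure_Un_le) (auto intro!: SS_sets)
  also have "\<dots> = measure lebesgue (SS \<inter> {s..a+t}) + measure lebesgue {a..<s}"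
    using s unfolding a_def by simp
  also have "\<dots> = measure lebesgue ({a..<s} \<union> (SS \<inter> {s..a+t}))"
  proof -
    have m1: "{a..<s} \<in> lmeasurable" by (rule Ico_lm)
    have m2: "SS \<inter> {s..a+t} \<in> lmeasurable" by (rule SS_fm)
    have "measure lebesgue ({a..<s} \<union> (SS \<inter> {s..a+t}))
        = measure lebesgue {a..<s} + measure lebesgue (SS \<inter> {s..a+t})"
    proof -
      have "SS \<inter> {s..a+t} - {a..<s} = SS \<inter> {s..a+t}" by auto
      then show ?thesis using measure_Un2[OF m1 m2] by simp
    qed
    then show ?thesis by simp
  qed
  also have "\<dots> \<le> measure lebesgue (SS \<inter> {a..a+t})"
  proof (rule measure_mono_fmeasurable)
    show "{a..<s} \<union> SS \<inter> {s..a + t} \<in> sets lebesgue"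
      using fmeasurable.Un[OF Ico_lm[of a s] SS_fm[of s "a+t"]] by blast
  qed (use W True s t in \<open>auto intro!: SS_fm SS_sets simp: a_def\<close>)
  finally show ?thesis unfolding a_def .
next
  case False
  have "{ox i..ox i + t} \<subseteq> SS" using win_SS[of i] s False by auto
  then have "SS \<inter> {ox i..ox i + t} = {ox i..ox i + t}" by auto
  moreover have "measure lebesgue (SS \<inter> {s..s+t}) \<le> measure lebesgue {s..s+t}"
    by (rule measure_mono_fmeasurable) (auto intro!: SS_sets)
  ultimately show ?thesis using t by simp
qed

lemma shift_gap:
  assumes t: "t \<ge> 0" and s: "ox i + lx i \<le> s" "s < ox (i+1)"
  shows "measure lebesgue (SS \<inter> {s..s+t}) \<le> measure lebesgue (SS \<inter> {ox (i+1)..ox (i+1) + t})"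
proof (rule measure_mono_fmeasurable)
  show "SS \<inter> {s..s+t} \<subseteq> SS \<inter> {ox (i+1)..ox (i+1) + t}"
  proof
    fix x assume x: "x \<in> SS \<inter> {s..s+t}"
    then obtain k where k: "ox k \<le> x" "x < ox k + lx k" using mem_SS by blast
    have "i + 1 \<le> k"
    proof (rule ccontr)
      assume "\<not> i + 1 \<le> k"
      then have "k \<le> i" by simp
      then have "ox k + lx k \<le> ox i + lx i" using mono_gap[of k i] ll_nn[of i] by (cases "k = i") auto
      then show False using x k s by auto
    qed
    then have "ox (i+1) \<le> x" using mono[of "i+1" k] k by simp
    then show "x \<in> SS \<inter> {ox (i+1)..ox (i+1) + t}" using x s by auto
  qed
qed (auto intro!: SS_sets SS_fm)

lemma exists_i: "\<exists>i. ox i \<le> s \<and> s < ox (i+1)"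
proof -
  define q where "q = \<lfloor>(s - off 0) / p\<rfloor>"
  have o0: "ox (0 + q * int N) = off 0 + of_int q * p" using oo_shift[of 0 q] oo_base[of 0] N by simp
  have o1: "ox (0 + (q+1) * int N) = off 0 + of_int (q+1) * p" using oo_shift[of 0 "q+1"] oo_base[of 0] N by simp
  have "of_int q \<le> (s - off 0) / p" unfolding q_def by simp
  then have lo: "ox (q * int N) \<le> s" using o0 p by (simp add: field_simps)
  have "(s - off 0) / p < of_int q + 1" unfolding q_def by linarith
  then have hi: "s < ox ((q+1) * int N)" using o1 p by (simp add: field_simps)
  define A where "A = {k \<in> {q * int N..<(q+1) * int N}. ox k \<le> s}"
  have finA: "finite A" unfolding A_def by (rule finite_subset[of _ "{q * int N..<(q+1) * int N}"]) auto
  have qA: "q * int N \<in> A" unfolding A_def using lo N by (simp add: algebra_simps)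
  define i where "i = Max A"
  have iA: "i \<in> A" unfolding i_def using finA qA Max_in by blast
  have "s < ox (i+1)"
  proof (cases "i + 1 < (q+1) * int N")
    case True
    have "i + 1 \<notin> A"
    proof
      assume "i + 1 \<in> A"
      then have "i + 1 \<le> i" unfolding i_def using finA Max_ge by blast
      then show False by simp
    qed
    then show ?thesis using True iA unfolding A_def by auto
  next
    case False
    then have "i + 1 = (q+1) * int N" using iA unfolding A_def by auto
    then show ?thesis using hi by simp
  qed
  moreover have "ox i \<le> s" using iA unfolding A_def by simp
  ultimately show ?thesis by blast
qed

definition TT :: "real \<Rightarrow> real \<Rightarrow> int \<Rightarrow> real" where
  "TT C t i = (\<Sum>j\<in>{i..i + int N - 1}. lx j * C *
              of_int \<lceil>(t - (ox j - ox i)) / p\<rceil>)"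

lemma TT_shift: "TT C t (i + m * int N) = TT C t i"
proof -
  have "TT C t (i + m * int N) = (\<Sum>j\<in>(\<lambda>j. j + m * int N) ` {i..i + int N - 1}. lx j * C *
              of_int \<lceil>(t - (ox j - ox (i + m * int N))) / p\<rceil>)"
    unfolding TT_def by (intro sum.cong) (auto simp: image_iff intro: bexI[of _ "_ - m * int N"])
  also have "\<dots> = TT C t i"
    unfolding TT_def by (subst sum.reindex) (auto simp: inj_on_def ll_shift oo_shift)
  finally show ?thesis .
qed

lemma TT_mod: "TT C t i = TT C t (i mod int N)"
  using TT_shift[of C t "i mod int N" "i div int N"] by simp

lemma TT_bound: assumes "t \<ge> 0" "C > 0"
  shows "C * measure lebesgue (SS \<inter> {ox j..ox j + t}) \<le> TT C t j"
proof -
  have "C * measure lebesgue (SS \<inter> {ox j..ox j + t})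
     \<le> C * (\<Sum>k\<in>{j..j + int N - 1}. lx k * of_int \<lceil>(t - (ox k - ox j)) / p\<rceil>)"
    using bound_at[OF assms(1), of j] assms(2) by simp
  also have "\<dots> = TT C t j" unfolding TT_def sum_distrib_left by (simp add: ac_simps)
  finally show ?thesis .
qed

end

theorem lemma1:
  fixes C p :: real and N :: nat and off L :: "nat \<Rightarrow> real"
  assumes "C > 0" and "p > 0" and "N \<ge> 1"
    and "0 \<le> off 0"
    and "\<And>k. Suc k < N \<Longrightarrow> off k < off (Suc k)"
    and "off (N - 1) < p"
    and "\<And>k. k < N \<Longrightarrow> L k \<ge> 0"
    and "\<And>k. Suc k < N \<Longrightarrow> off k + L k \<le> off (Suc k)"
    and "off (N - 1) + L (N - 1) \<le> off 0 + p"
  shows "\<forall>s::real. \<forall>t::real. t \<ge> 0 \<longrightarrow>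
           C * delta_ST off L N p s (s + t) \<le> alpha_ST C off L N p t"
proof (intro allI impI)
  fix s t :: real assume t: "t \<ge> 0"
  interpret g: gcl p N off L using assms by unfold_locales auto
  obtain i where i: "off_ext off N p i \<le> s" "s < off_ext off N p (i+1)" using g.exists_i by blast
  obtain j where j: "measure lebesgue (ST_set off L N p \<inter> {s..s+t})
       \<le> measure lebesgue (ST_set off L N p \<inter> {off_ext off N p j..off_ext off N p j + t})"
  proof (cases "s < off_ext off N p i + len_ext L N i")
    case True then show ?thesis using that g.shift_in[OF t i(1)] by blast
  next
    case False then show ?thesis using that g.shift_gap[OF t _ i(2)] by simp
  qed
  have "C * delta_ST off L N p s (s + t) \<le> C * measure lebesgue (ST_set off L N p \<inter> {off_ext off N p j..off_ext off N p j + t})"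
    unfolding delta_ST_def using j assms(1) by simp
  also have "\<dots> \<le> g.TT C t j" by (rule g.TT_bound[OF t assms(1)])
  also have "\<dots> = g.TT C t (j mod int N)" by (rule g.TT_mod)
  also have "\<dots> \<le> Max (g.TT C t ` {0..<int N})"
    by (rule Max_ge) (use assms(3) in auto)
  also have "\<dots> = alpha_ST C off L N p t" unfolding alpha_ST_def g.TT_def by simp
  finally show "C * delta_ST off L N p s (s + t) \<le> alpha_ST C off L N p t" .
qed

end
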